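(* There exists a binary Euclidean LCD $[29,11,9]$ code.
   Context: A binary $[n,k,d]$ code is a $k$-dimensional subspace $C\subseteq\mathbb{F}_2^n$ with minimum nonzero Hamming weight $d$; it is Euclidean LCD if $C\cap C^{\perp_E}=\{0\}$, where $C^{\perp_E}$ is the dual with respect to $\langle x,y\rangle_E=\sum x_iy_i$. *)

theory Defs
  imports "HOL-Analysis.Analysis" "HOL-Library.Z2"
begin

definition hamming_weight :: "bit ^ 'n \<Rightarrow> nat" where
  "hamming_weight x = card {i. x $ i \<noteq> 0}"

definition euclid_inner :: "bit ^ 'n \<Rightarrow> bit ^ 'n \<Rightarrow> bit" where
  "euclid_inner x y = (\<Sum>i\<in>UNIV. x $ i * y $ i)"

definition euclid_dual :: "(bit ^ 'n) set \<Rightarrow> (bit ^ 'n) set" where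
  "euclid_dual C = {y. \<forall>x\<in>C. euclid_inner x y = 0}"

definition min_distance :: "(bit ^ 'n) set \<Rightarrow> nat" where
  "min_distance C = Min (hamming_weight ` (C - {0}))"

definition binary_linear_code :: "nat \<Rightarrow> nat \<Rightarrow> nat \<Rightarrow> (bit ^ 'n) set \<Rightarrow> bool" where
  "binary_linear_code n k d C \<longleftrightarrow>
     CARD('n) = n \<and> vec.subspace C \<and> vec.dim C = k \<and> min_distance C = d"

definition euclidean_LCD :: "(bit ^ 'n) set \<Rightarrow> bool" where
  "euclidean_LCD C \<longleftrightarrow> C \<inter> euclid_dual C = {0}"

end

theory Submission
  imports Defs
begin

fun xl :: "bool list \<Rightarrow> bool list \<Rightarrow> bool list" where
  "xl (a # as) (b # bs) = (a \<noteq> b) # xl as bs"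
| "xl _ _ = []"

fun al :: "bool list \<Rightarrow> bool list \<Rightarrow> bool list" where
  "al (a # as) (b # bs) = (a \<and> b) # al as bs"
| "al _ _ = []"

definition wt :: "bool list \<Rightarrow> nat" where "wt xs = length (filter id xs)"

lemma xl_length[simp]: "length (xl a b) = min (length a) (length b)"
  by (induction a b rule: xl.induct) auto
lemma al_length[simp]: "length (al a b) = min (length a) (length b)"
  by (induction a b rule: al.induct) auto
lemma xl_nth: "k < length a \<Longrightarrow> k < length b \<Longrightarrow> xl a b ! k = (a ! k \<noteq> b ! k)"
  by (induction a b arbitrary: k rule: xl.induct) (auto simp: nth_Cons split: nat.splits)
lemma al_nth: "k < length a \<Longrightarrow> k < length b \<Longrightarrow> al a b ! k = (a ! k \<and> b ! k)"
  by (induction a b arbitrary: k rule: al.induct) (auto simp: nth_Cons split: nat.splits)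

definition vl :: "('n \<Rightarrow> nat) \<Rightarrow> bool list \<Rightarrow> bit ^ 'n" where
  "vl h xs = (\<chi> i. if xs ! h i then 1 else 0)"

lemma bit_of_nat: "(of_nat n :: bit) = (if odd n then 1 else 0)"
  by (induction n) auto

lemma card_h:
  assumes h: "bij_betw h (UNIV :: 'n::finite set) {0..<N}" and len: "length xs = N"
  shows "card {i. xs ! h i} = wt xs"
proof -
  have "inj h" using h by (simp add: bij_betw_def)
  have "h ` {i. xs ! h i} = {k. k < length xs \<and> xs ! k}"
  proof
    show "h ` {i. xs ! h i} \<subseteq> {k. k < length xs \<and> xs ! k}"
      using h len by (auto simp: bij_betw_def)
  next
    show "{k. k < length xs \<and> xs ! k} \<subseteq> h ` {i. xs ! h i}"
    proof
      fix k assume k: "k \<in> {k. k < length xs \<and> xs ! k}"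
      then have "k \<in> h ` UNIV" using h len by (auto simp: bij_betw_def)
      then obtain i where "k = h i" by auto
      then show "k \<in> h ` {i. xs ! h i}" using k by auto
    qed
  qed
  then have "card {i. xs ! h i} = card {k. k < length xs \<and> xs ! k}"
    using card_image[of h "{i. xs ! h i}"] \<open>inj h\<close> by (metis inj_on_subset subset_UNIV)
  then show ?thesis by (simp add: wt_def length_filter_conv_card)
qed

lemma hw_vl:
  assumes h: "bij_betw h (UNIV :: 'n::finite set) {0..<N}" and len: "length xs = N"
  shows "hamming_weight (vl h xs :: bit ^ 'n) = wt xs"
proof -
  have "{i. vl h xs $ i \<noteq> 0} = {i. xs ! h i}" by (auto simp: vl_def)
  then show ?thesis using card_h[OF h len] by (simp add: hamming_weight_def)
qed

lemma inner_vl: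
  assumes h: "bij_betw h (UNIV :: 'n::finite set) {0..<N}" and la: "length a = N" and lb: "length b = N"
  shows "euclid_inner (vl h a :: bit ^ 'n) (vl h b) = (if odd (wt (al a b)) then 1 else 0)"
proof -
  have hN: "h i < N" for i using h by (auto simp: bij_betw_def)
  have "euclid_inner (vl h a :: bit ^ 'n) (vl h b) = (\<Sum>i\<in>UNIV. of_bool (al a b ! h i))"
    unfolding euclid_inner_def vl_def using hN la lb by (intro sum.cong) (auto simp: al_nth)
  also have "\<dots> = of_nat (card {i. al a b ! h i})" by simp
  also have "\<dots> = of_nat (wt (al a b))" using card_h[OF h, of "al a b"] la lb by simp
  finally show ?thesis by (simp add: bit_of_nat)
qed

lemma vl_xl:
  assumes h: "bij_betw h (UNIV :: 'n::finite set) {0..<N}" and la: "length a = N" and lb: "length b = N"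
  shows "(vl h (xl a b) :: bit ^ 'n) = vl h a + vl h b"
proof -
  have hN: "h i < N" for i using h by (auto simp: bij_betw_def)
  show ?thesis unfolding vl_def vec_eq_iff using hN la lb by (auto simp: xl_nth)
qed

lemma vl_zero:
  assumes h: "bij_betw h (UNIV :: 'n::finite set) {0..<N}"
  shows "(vl h (replicate N False) :: bit ^ 'n) = 0"
proof -
  have hN: "h i < N" for i using h by (auto simp: bij_betw_def)
  show ?thesis using hN by (simp add: vl_def vec_eq_iff)
qed

lemma span_insert_bit:
  assumes "(y :: bit ^ 'n) \<in> vec.span (insert a S)"
  shows "y \<in> vec.span S \<or> (\<exists>y'\<in>vec.span S. y = a + y')"
proof -
  from assms obtain k where k: "y - k *s a \<in> vec.span S" by (auto simp: vec.span_insert)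
  show ?thesis
  proof (cases "k = 0")
    case True then show ?thesis using k by simp
  next
    case False then have "k = 1" by simp
    then show ?thesis using k by (intro disjI2 bexI[of _ "y - a"]) auto
  qed
qed

lemma inner_sym: "euclid_inner x y = euclid_inner y x"
  unfolding euclid_inner_def by (simp only: mult.commute)

lemma inner_add: "euclid_inner g (x + y) = euclid_inner g x + euclid_inner g y"
  unfolding euclid_inner_def by (simp only: vector_add_component distrib_left sum.distrib)

lemma inner_scale: "euclid_inner g (c *s x) = c * euclid_inner g x"
  unfolding euclid_inner_def
  by (simp only: vector_smult_component sum_distrib_left mult.left_commute)

lemma inner_zero: "euclid_inner g 0 = 0"
  unfolding euclid_inner_def by (simp only: zero_index mult_zero_right sum.neutral_const)

lemma inner_span_zero:
  assumes "(y :: bit ^ 'n) \<in> vec.span S" and "\<forall>s\<in>S. euclid_inner g s = 0"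
  shows "euclid_inner g y = 0"
proof -
  have "vec.subspace {y. euclid_inner g y = 0}"
    unfolding vec.subspace_def by (simp add: inner_add inner_scale inner_zero)
  then show ?thesis using vec.span_induct[OF assms(1), of "\<lambda>y. euclid_inner g y = 0"] assms(2) by blast
qed

fun orth :: "(bit ^ 'n) list \<Rightarrow> bool" where
  "orth [] = True"
| "orth (g # gs) = (euclid_inner g g = 1 \<and> (\<forall>g'\<in>set gs. euclid_inner g g' = 0) \<and> orth gs)"

lemma orth_dim: "orth gs \<Longrightarrow> vec.dim (vec.span (set gs)) = length gs"
proof (induction gs)
  case Nil then show ?case by simp
next
  case (Cons g gs)
  have "g \<notin> vec.span (set gs)"
  proof
    assume "g \<in> vec.span (set gs)"
    then have "euclid_inner g g = 0" using inner_span_zero[of g "set gs" g] Cons.prems by auto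
    then show False using Cons.prems by simp
  qed
  then show ?case using Cons by (simp add: vec.dim_span vec.dim_insert)
qed

lemma orth_lcd:
  "orth gs \<Longrightarrow> x \<in> vec.span (set gs) \<Longrightarrow> \<forall>g\<in>set gs. euclid_inner g x = 0 \<Longrightarrow> x = 0"
proof (induction gs arbitrary: x)
  case Nil then show ?case by simp
next
  case (Cons g gs)
  have o: "\<forall>s\<in>set gs. euclid_inner g s = 0" using Cons.prems by simp
  from span_insert_bit[of x g "set gs"] Cons.prems(2)
  have "x \<in> vec.span (set gs) \<or> (\<exists>y'\<in>vec.span (set gs). x = g + y')" by simp
  then show ?case
  proof
    assume "x \<in> vec.span (set gs)"
    then show ?thesis using Cons by simp
  next
    assume "\<exists>y'\<in>vec.span (set gs). x = g + y'"
    then obtain y' where y': "y' \<in> vec.span (set gs)" "x = g + y'" by blast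
    have "euclid_inner g y' = 0" using inner_span_zero[OF y'(1) o] .
    moreover have "euclid_inner g x = euclid_inner g g + euclid_inner g y'"
      unfolding y'(2) by (rule inner_add)
    ultimately have "euclid_inner g x = 1" using Cons.prems by simp
    then show ?thesis using Cons.prems by simp
  qed
qed

fun chk :: "bool list list \<Rightarrow> bool list \<Rightarrow> bool" where
  "chk [] acc = (wt acc = 0 \<or> 9 \<le> wt acc)"
| "chk (g # gs) acc = (chk gs acc \<and> chk gs (xl g acc))"

fun orthl :: "bool list list \<Rightarrow> bool" where
  "orthl [] = True"
| "orthl (g # gs) = (odd (wt (al g g)) \<and> (\<forall>g'\<in>set gs. even (wt (al g g'))) \<and> orthl gs)"

lemma chk_span:
  assumes h: "bij_betw h (UNIV :: 'n::finite set) {0..<N}"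
  shows "\<forall>g\<in>set gs. length g = N \<Longrightarrow> length acc = N \<Longrightarrow> chk gs acc \<Longrightarrow>
    (y :: bit ^ 'n) \<in> vec.span (vl h ` set gs) \<Longrightarrow>
    hamming_weight (vl h acc + y) = 0 \<or> 9 \<le> hamming_weight (vl h acc + y)"
proof (induction gs arbitrary: acc y)
  case Nil
  then have "y = 0" by simp
  then show ?case using Nil hw_vl[OF h, of acc] by simp
next
  case (Cons g gs)
  have lg: "length g = N" using Cons.prems by simp
  from span_insert_bit[of y "vl h g" "vl h ` set gs"] Cons.prems(4)
  have "y \<in> vec.span (vl h ` set gs) \<or> (\<exists>y'\<in>vec.span (vl h ` set gs). y = vl h g + y')" by simp
  then show ?case
  proof
    assume "y \<in> vec.span (vl h ` set gs)"
    then show ?thesis using Cons by simp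
  next
    assume "\<exists>y'\<in>vec.span (vl h ` set gs). y = vl h g + y'"
    then obtain y' where y': "y' \<in> vec.span (vl h ` set gs)" "y = vl h g + y'" by blast
    have e: "vl h acc + y = vl h (xl g acc) + y'"
      using vl_xl[OF h lg Cons.prems(2)] y'(2) by (simp add: algebra_simps)
    have "length (xl g acc) = N" using lg Cons.prems(2) by simp
    then show ?thesis unfolding e using Cons y' by simp
  qed
qed

lemma orthl_orth:
  assumes h: "bij_betw h (UNIV :: 'n::finite set) {0..<N}"
  shows "\<forall>g\<in>set gs. length g = N \<Longrightarrow> orthl gs \<Longrightarrow> orth (map (vl h :: _ \<Rightarrow> bit ^ 'n) gs)"
proof (induction gs)
  case Nil then show ?case by simp
next
  case (Cons g gs)
  then show ?case using inner_vl[OF h] by auto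
qed

definition Gn :: "nat list list" where
  "Gn = [
    [0,0,1,0,0,0,1,1,1,0,1,0,0,1,0,0,1,1,1,0,0,1,0,0,1,0,0,0,0],
    [0,1,1,1,1,0,1,0,1,1,1,1,0,0,1,1,0,0,1,1,1,1,1,1,0,1,0,0,1],
    [1,1,1,0,1,1,0,0,0,1,0,0,0,0,1,1,0,0,0,1,1,1,1,0,0,1,0,1,1],
    [0,0,0,0,1,0,0,0,1,1,1,0,1,0,1,0,0,0,0,0,1,0,1,0,0,1,0,0,0],
    [1,1,1,1,0,1,0,1,1,1,0,0,0,1,0,0,0,1,0,0,1,0,0,0,1,1,1,0,1],
    [1,0,1,0,1,1,1,1,0,1,0,0,0,1,1,1,0,1,0,1,0,0,1,0,1,0,0,1,0],
    [0,1,1,0,0,1,0,0,1,0,0,0,0,0,0,1,1,0,0,1,1,0,0,1,1,0,1,1,1],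
    [1,0,0,0,1,1,0,1,1,0,1,1,1,1,0,1,1,0,1,1,0,1,0,0,1,0,0,0,0],
    [0,1,1,1,1,1,1,1,0,0,1,0,1,0,1,0,1,0,1,1,1,0,0,0,0,1,0,1,1],
    [0,1,0,1,1,1,1,0,0,1,1,1,0,0,0,1,0,1,0,0,1,0,1,1,1,1,0,0,0],
    [1,1,0,1,1,0,0,1,0,0,1,1,1,1,0,0,0,1,1,1,0,0,0,0,1,1,0,1,0]]"

definition G :: "bool list list" where "G = map (map (\<lambda>n. n = 1)) Gn"

lemma G_len: "\<forall>g\<in>set G. length g = 29" by (simp add: G_def Gn_def)
lemma G_length: "length G = 11" by (simp add: G_def Gn_def)
lemma G_orthl: "orthl G" by (simp add: G_def Gn_def wt_def)
definition z29 :: "bool list" where "z29 = [False, False, False, False, False, False, False, False, False, False, False, False, False, False, False, False, False, False, False, False, False, False, False, False, False, False, False, False, False]"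

lemma z29_eq: "z29 = replicate 29 False" by (simp add: z29_def numeral_eq_Suc)

lemma G_chk: "chk G (replicate 29 False)"
  unfolding z29_eq[symmetric] by (simp add: z29_def G_def Gn_def wt_def)
lemma G3: "wt (G ! 3) = 9" by (simp add: G_def Gn_def wt_def)

theorem proposition4p5:
  shows "\<exists>C :: (bit ^ 29) set. binary_linear_code 29 11 9 C \<and> euclidean_LCD C"
proof -
  obtain h :: "29 \<Rightarrow> nat" where h: "bij_betw h UNIV {0..<29}"
    using ex_bij_betw_finite_nat[of "UNIV :: 29 set"] by auto
  define gs :: "(bit ^ 29) list" where "gs = map (vl h) G"
  define C where "C = vec.span (set gs)"
  have orth: "orth gs" unfolding gs_def using orthl_orth[OF h] G_len G_orthl by blast
  have dim: "vec.dim C = 11" unfolding C_def using orth_dim[OF orth] G_length gs_def by simp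
  have sub: "vec.subspace C" unfolding C_def by (rule vec.subspace_span)
  have wts: "hamming_weight y = 0 \<or> 9 \<le> hamming_weight y" if "y \<in> C" for y
    using chk_span[OF h, of G "replicate 29 False" y] G_len G_chk that vl_zero[OF h]
    unfolding C_def gs_def by simp
  have hw0: "y = 0" if "hamming_weight (y :: bit ^ 29) = 0" for y
  proof -
    have "{i. y $ i \<noteq> 0} = {}" using that by (simp add: hamming_weight_def)
    then show ?thesis by (auto simp: vec_eq_iff)
  qed
  have g3C: "vl h (G ! 3) \<in> C" unfolding C_def gs_def
    by (rule vec.span_base) (simp add: G_length)
  have g3w: "hamming_weight (vl h (G ! 3) :: bit ^ 29) = 9"
    using hw_vl[OF h, of "G ! 3"] G_len G_length G3 by simp
  have md: "min_distance C = 9"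
    unfolding min_distance_def
  proof (rule Min_eqI)
    have le: "hamming_weight (y :: bit ^ 29) \<le> 29" for y
      unfolding hamming_weight_def using card_mono[of UNIV "{i. y $ i \<noteq> 0}"] by simp
    have "hamming_weight ` (C - {0}) \<subseteq> {..29}" using le by auto
    then show "finite (hamming_weight ` (C - {0}))" using finite_subset by blast
  next
    fix w assume "w \<in> hamming_weight ` (C - {0})"
    then obtain y where "y \<in> C" "y \<noteq> 0" "w = hamming_weight y" by blast
    then show "9 \<le> w" using wts hw0 by blast
  next
    have "vl h (G ! 3) \<noteq> (0 :: bit ^ 29)" using g3w by (auto simp: hamming_weight_def)
    then show "9 \<in> hamming_weight ` (C - {0})" using g3C g3w by force
  qed
  have lcd: "euclidean_LCD C"
    unfolding euclidean_LCD_def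
  proof
    show "C \<inter> euclid_dual C \<subseteq> {0}"
    proof
      fix x assume x: "x \<in> C \<inter> euclid_dual C"
      have "\<forall>g\<in>set gs. euclid_inner g x = 0"
        using x unfolding euclid_dual_def C_def by (auto intro: vec.span_base)
      then have "x = 0" using orth_lcd[OF orth] x unfolding C_def by blast
      then show "x \<in> {0}" by simp
    qed
  next
    show "{0} \<subseteq> C \<inter> euclid_dual C"
      using vec.subspace_0[OF sub] unfolding euclid_dual_def by (auto intro: inner_zero)
  qed
  show ?thesis
    by (rule exI[of _ C]) (simp add: binary_linear_code_def sub dim md lcd)
qed

end
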